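(* Let $\mathscr G\alpha(\zeta,q)=\sum_{n=0}^\infty\zeta^n\sum_{s=0}^\infty q^s\alpha(n,s)$. This double series converges absolutely for all $\zeta,q\in\mathbb C$ with $|\zeta|<1$ and $|q|\le1$, and for such $\zeta,q$, \[ \mathscr G\alpha(\zeta,q)=\frac{2\zeta(1-q)\,[N-\zeta(N-2+2q)]^{-1}}{N(1-\zeta)^2\,\mathrm{tr}\big((N-\zeta(N-2+2Q))^{-1}\big)}. \]
   Context: $E$ is a finite set with $N=\#E>8$ elements; $Q$ is an irreducible stochastic matrix on $E$ with $Q(x,y)=Q(y,x)$ for all $x,y$ and $\mathrm{tr}(Q)=0$; $I$ is the identity matrix, and $(N-\zeta(N-2+2Q))^{-1}$ is the matrix inverse of $NI-\zeta((N-2)I+2Q)$. The function $\alpha:\mathbb Z_+\times\mathbb Z_+\to\mathbb R$ is defined by $\alpha(0,s)=0$ for all $s$ and, for $n\in\mathbb Z_+$, $\alpha(n+1,0)=\frac2{N^2}+\alpha(n,0)+\frac2{N^2}\sum_{s\ge1}\alpha(n,s)\mathrm{tr}(Q^s)$, $\alpha(n+1,1)=-\frac2{N^2}+\frac{N-2}N\alpha(n,1)-\frac2{N^2}\sum_{s\ge1}\alpha(n,s)\mathrm{tr}(Q^s)$, $\alpha(n+1,s)=\frac{N-2}N\alpha(n,s)+\frac2N\alpha(n,s-1)$ for $s\ge2$ (so $\alpha(n,s)=0$ for $s\ge n+1$). *)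

theory Defs
  imports "HOL-Analysis.Analysis"
begin

primrec matpow :: "'a::semiring_1^'n^'n \<Rightarrow> nat \<Rightarrow> 'a^'n^'n" where
  "matpow A 0 = mat 1"
| "matpow A (Suc n) = A ** matpow A n"

definition stochastic :: "real^'e^'e \<Rightarrow> bool" where
  "stochastic Q \<longleftrightarrow> (\<forall>x y. Q$x$y \<ge> 0) \<and> (\<forall>x. (\<Sum>y\<in>UNIV. Q$x$y) = 1)"

definition irreducible_mat :: "real^'e^'e \<Rightarrow> bool" where
  "irreducible_mat Q \<longleftrightarrow> (\<forall>x y. \<exists>n. matpow Q n $x$y > 0)"

definition symmetric_mat :: "real^'e^'e \<Rightarrow> bool" where
  "symmetric_mat Q \<longleftrightarrow> (\<forall>x y. Q$x$y = Q$y$x)"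

primrec alpha_row :: "real^'e::finite^'e \<Rightarrow> nat \<Rightarrow> nat \<Rightarrow> real" where
  "alpha_row Q 0 = (\<lambda>s. 0)"
| "alpha_row Q (Suc n) =
    (let N = real CARD('e); a = alpha_row Q n;
         S = (\<Sum>s. a (Suc s) * trace (matpow Q (Suc s)))
     in (\<lambda>s. if s = 0 then 2 / N^2 + a 0 + 2 / N^2 * S
             else if s = 1 then - 2 / N^2 + (N - 2) / N * a 1 - 2 / N^2 * S
             else (N - 2) / N * a s + 2 / N * a (s - 1)))"

definition alpha :: "real^'e::finite^'e \<Rightarrow> nat \<Rightarrow> nat \<Rightarrow> real" where
  "alpha Q n s = alpha_row Q n s"

definition complex_mat :: "real^'e^'e \<Rightarrow> complex^'e^'e" where
  "complex_mat Q = (\<chi> i j. complex_of_real (Q$i$j))"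

definition Galpha :: "real^'e::finite^'e \<Rightarrow> complex \<Rightarrow> complex \<Rightarrow> complex" where
  "Galpha Q \<zeta> q = (\<Sum>n. \<zeta>^n * (\<Sum>s. q^s * complex_of_real (alpha Q n s)))"

end

theory Submission
  imports Defs
begin

lemma alpha_zero:
  fixes Q :: "real^'e::finite^'e"
  shows "n < s \<Longrightarrow> alpha_row Q n s = 0"
proof (induction n arbitrary: s)
  case 0 then show ?case by simp
next
  case (Suc n)
  then have "s \<noteq> 0" "s \<noteq> 1" "n < s" "n < s - 1" by auto
  then show ?case using Suc.IH by (simp add: Let_def)
qed

definition cc :: "real^'e::finite^'e \<Rightarrow> nat \<Rightarrow> real" where
  "cc Q n = 2 / (real CARD('e))^2 * (1 + (\<Sum>s\<le>n. alpha Q n s * trace (matpow Q s)))"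

lemma S_finite:
  fixes Q :: "real^'e::finite^'e"
  shows "(\<Sum>s. alpha_row Q n (Suc s) * trace (matpow Q (Suc s))) = (\<Sum>s<n. alpha_row Q n (Suc s) * trace (matpow Q (Suc s)))"
  by (rule suminf_finite) (auto simp: alpha_zero)

lemma alpha_rec:
  fixes Q :: "real^'e::finite^'e"
  defines "N \<equiv> real CARD('e)"
  shows "alpha Q (Suc n) s = cc Q n * (if s = 0 then 1 else if s = 1 then -1 else 0)
     + (N - 2) / N * alpha Q n s + (if s = 0 then 0 else 2 / N * alpha Q n (s - 1))"
proof -
  have N: "N > 0" unfolding N_def by simp
  have tr0: "trace (matpow Q 0) = N" by (simp add: trace_I N_def)
  have "(\<Sum>s\<le>n. alpha Q n s * trace (matpow Q s)) = (\<Sum>s<Suc n. alpha Q n s * trace (matpow Q s))"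
    by (simp add: lessThan_Suc_atMost)
  also have "\<dots> = alpha Q n 0 * N + (\<Sum>s<n. alpha_row Q n (Suc s) * trace (matpow Q (Suc s)))"
    by (subst sum.lessThan_Suc_shift) (simp add: tr0 alpha_def trace_I N_def)
  finally have e: "(\<Sum>s\<le>n. alpha Q n s * trace (matpow Q s)) = alpha Q n 0 * N + (\<Sum>s<n. alpha_row Q n (Suc s) * trace (matpow Q (Suc s)))" .
  show ?thesis
    using N unfolding cc_def e
    by (auto simp: alpha_def Let_def S_finite[simplified] N_def[symmetric] field_simps power2_eq_square)
qed


lemma poly_step:
  fixes Q :: "real^'e::finite^'e" and u :: "nat \<Rightarrow> 'v::real_vector" and L :: "'v \<Rightarrow> 'v"
  assumes L: "linear L" and u: "\<And>s. u (Suc s) = L (u s)"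
  defines "N \<equiv> real CARD('e)"
  shows "(\<Sum>s\<le>Suc n. alpha Q (Suc n) s *\<^sub>R u s) = cc Q n *\<^sub>R (u 0 - u 1)
     + ((N-2)/N) *\<^sub>R (\<Sum>s\<le>n. alpha Q n s *\<^sub>R u s) + (2/N) *\<^sub>R L (\<Sum>s\<le>n. alpha Q n s *\<^sub>R u s)"
proof -
  have "(\<Sum>s\<le>Suc n. alpha Q (Suc n) s *\<^sub>R u s) =
     (\<Sum>s\<le>Suc n. (cc Q n * (if s = 0 then 1 else if s = 1 then -1 else 0)) *\<^sub>R u s)
   + (\<Sum>s\<le>Suc n. ((N - 2) / N * alpha Q n s) *\<^sub>R u s)
   + (\<Sum>s\<le>Suc n. (if s = 0 then 0 else 2 / N * alpha Q n (s - 1)) *\<^sub>R u s)"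
    unfolding alpha_rec N_def scaleR_add_left sum.distrib by simp
  also have "(\<Sum>s\<le>Suc n. (cc Q n * (if s = 0 then 1 else if s = 1 then -1 else 0)) *\<^sub>R u s) = cc Q n *\<^sub>R (u 0 - u 1)"
  proof -
    have "(\<Sum>s\<le>n. (cc Q n * (if Suc s = 1 then -1 else 0)) *\<^sub>R u (Suc s)) =
          (\<Sum>s\<le>n. if s = 0 then - cc Q n *\<^sub>R u 1 else 0)"
      by (rule sum.cong) auto
    also have "\<dots> = - cc Q n *\<^sub>R u 1" by (simp add: sum.delta)
    finally show ?thesis
      by (subst sum.atMost_Suc_shift) (simp add: algebra_simps)
  qed
  also have "(\<Sum>s\<le>Suc n. ((N - 2) / N * alpha Q n s) *\<^sub>R u s) = ((N-2)/N) *\<^sub>R (\<Sum>s\<le>n. alpha Q n s *\<^sub>R u s)"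
    by (simp add: alpha_def alpha_zero scaleR_sum_right)
  also have "(\<Sum>s\<le>Suc n. (if s = 0 then 0 else 2 / N * alpha Q n (s - 1)) *\<^sub>R u s) = (2/N) *\<^sub>R L (\<Sum>s\<le>n. alpha Q n s *\<^sub>R u s)"
    by (subst sum.atMost_Suc_shift) (simp add: u linear_sum[OF L] linear_scale[OF L] scaleR_sum_right)
  finally show ?thesis .
qed


lemma mm_add_r: "((A::'a::comm_ring_1^'n^'m) + B) ** (C::'a^'p^'n) = A ** C + B ** C"
  by (simp add: matrix_matrix_mult_def vec_eq_iff sum.distrib distrib_right)
lemma mm_diff_r: "((A::'a::comm_ring_1^'n^'m) - B) ** (C::'a^'p^'n) = A ** C - B ** C"
  by (simp add: matrix_matrix_mult_def vec_eq_iff sum_subtractf left_diff_distrib)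
lemma mm_diff_l: "(A::'a::comm_ring_1^'n^'m) ** ((B::'a^'p^'n) - C) = A ** B - A ** C"
  by (simp add: matrix_matrix_mult_def vec_eq_iff sum_subtractf right_diff_distrib)
lemma mat_entry: "mat a $ i $ j = (if i = j then a else 0)"
  by (simp add: mat_def)
lemma mult_entry: "(A ** B) $ i $ j = (\<Sum>k\<in>UNIV. A $ i $ k * B $ k $ j)"
  by (simp add: matrix_matrix_mult_def)
lemma mat_mult_entry: "(mat (a::'a::comm_ring_1) ** (B::'a^'n^'m)) $ i $ j = a * B $ i $ j"
  by (simp add: mult_entry mat_entry if_distrib if_distribR cong: if_cong)
lemma trace_scaleR: "trace (c *\<^sub>R (A::real^'n^'n)) = c * trace A"
  by (simp add: trace_def sum_distrib_left)
lemma trace_sum: "trace (\<Sum>x\<in>S. (f x :: real^'n^'n)) = (\<Sum>x\<in>S. trace (f x))"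
  by (simp add: trace_def sum_component sum.swap[of _ S])
lemma linear_lmult: "linear (\<lambda>B::real^'n^'m. (A::real^'m^'k) ** B)"
  by (rule linearI) (simp_all add: matrix_add_ldistrib matrix_scalar_ac scalar_matrix_assoc)

definition PP :: "real^'e::finite^'e \<Rightarrow> nat \<Rightarrow> real^'e^'e" where
  "PP Q n = (\<Sum>s\<le>n. alpha Q n s *\<^sub>R matpow Q s)"
definition DD :: "real^'e::finite^'e \<Rightarrow> real^'e^'e" where
  "DD Q = mat 1 - Q"
definition RR :: "real^'e::finite^'e \<Rightarrow> real^'e^'e" where
  "RR Q = ((real CARD('e) - 2) / real CARD('e)) *\<^sub>R mat 1 + (2 / real CARD('e)) *\<^sub>R Q"

lemma PP_Suc: "PP Q (Suc n) = cc Q n *\<^sub>R DD Q + RR Q ** PP Q n"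
  unfolding PP_def
  by (subst poly_step[where L = "\<lambda>B. Q ** B", OF linear_lmult]) 
     (simp_all add: DD_def RR_def mm_add_r scalar_matrix_assoc[symmetric])

lemma PP_0: "PP Q 0 = 0"
  by (simp add: PP_def alpha_def)

lemma trace_PP: "trace (PP Q n) = (\<Sum>s\<le>n. alpha Q n s * trace (matpow Q s))"
  by (simp add: PP_def trace_sum trace_scaleR)

lemma cc_PP: "cc Q n = 2 / (real CARD('e))^2 * (1 + trace (PP Q n))"
  for Q :: "real^'e::finite^'e"
  by (simp add: cc_def trace_PP)


lemma RR_DD_comm: "RR Q ** DD Q = DD Q ** RR Q"
proof -
  have "Q ** RR Q = RR Q ** Q"
    unfolding RR_def by (simp add: mm_add_r matrix_add_ldistrib matrix_scalar_ac scalar_matrix_assoc[symmetric])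
  then show ?thesis unfolding DD_def by (simp add: mm_diff_r mm_diff_l)
qed

lemma RR_DD_pow: "RR Q ** (DD Q ** matpow (RR Q) m) = DD Q ** matpow (RR Q) (Suc m)"
  by (simp add: matrix_mul_assoc RR_DD_comm)

definition ww :: "real^'e::finite^'e \<Rightarrow> nat \<Rightarrow> real" where
  "ww Q m = trace (DD Q ** matpow (RR Q) m)"

lemma PP_closed: "PP Q n = (\<Sum>k<n. cc Q k *\<^sub>R (DD Q ** matpow (RR Q) (n - 1 - k)))"
proof (induction n)
  case 0 then show ?case by (simp add: PP_0)
next
  case (Suc n)
  have "RR Q ** PP Q n = (\<Sum>k<n. cc Q k *\<^sub>R (DD Q ** matpow (RR Q) (Suc n - 1 - k)))"
    unfolding Suc.IH linear_sum[OF linear_lmult]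
  proof (rule sum.cong)
    fix k assume "k \<in> {..<n}"
    then have "Suc (n - 1 - k) = Suc n - 1 - k" by auto
    then show "RR Q ** (cc Q k *\<^sub>R (DD Q ** matpow (RR Q) (n - 1 - k))) = cc Q k *\<^sub>R (DD Q ** matpow (RR Q) (Suc n - 1 - k))"
      by (simp only: matrix_scalar_ac scalar_matrix_assoc[symmetric] RR_DD_pow)
  qed simp
  then show ?case by (simp add: PP_Suc)
qed

lemma trace_PP_closed: "trace (PP Q n) = (\<Sum>k<n. cc Q k * ww Q (n - 1 - k))"
  unfolding PP_closed trace_sum trace_scaleR ww_def ..


lemma quad_le:
  fixes P :: "real^'n^'n" and v :: "'n \<Rightarrow> real"
  assumes nn: "\<forall>x y. P$x$y \<ge> 0" and rs: "\<forall>x. (\<Sum>y\<in>UNIV. P$x$y) = 1" and sy: "\<forall>x y. P$x$y = P$y$x"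
  shows "(\<Sum>y\<in>UNIV. \<Sum>z\<in>UNIV. P$y$z * (v y * v z)) \<le> (\<Sum>y\<in>UNIV. (v y)^2)"
proof -
  have "(\<Sum>y\<in>UNIV. \<Sum>z\<in>UNIV. P$y$z * (v y * v z)) \<le> (\<Sum>y\<in>UNIV. \<Sum>z\<in>UNIV. P$y$z * (((v y)^2 + (v z)^2) / 2))"
  proof (intro sum_mono mult_left_mono)
    fix y z
    show "v y * v z \<le> ((v y)^2 + (v z)^2) / 2"
      using sum_squares_ge_zero[of "v y - v z" 0] by (simp add: power2_eq_square algebra_simps)
    show "0 \<le> P $ y $ z" using nn by auto
  qed
  also have "\<dots> = ((\<Sum>y\<in>UNIV. (v y)^2 * (\<Sum>z\<in>UNIV. P$y$z)) + (\<Sum>z\<in>UNIV. (v z)^2 * (\<Sum>y\<in>UNIV. P$y$z))) / 2"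
  proof -
    have "(\<Sum>y\<in>UNIV. \<Sum>z\<in>UNIV. P$y$z * (((v y)^2 + (v z)^2) / 2)) =
       ((\<Sum>y\<in>UNIV. \<Sum>z\<in>UNIV. (v y)^2 * P$y$z) + (\<Sum>y\<in>UNIV. \<Sum>z\<in>UNIV. (v z)^2 * P$y$z)) / 2"
      by (simp add: sum_divide_distrib sum.distrib add_divide_distrib algebra_simps)
    also have "(\<Sum>y\<in>UNIV. \<Sum>z\<in>UNIV. (v z)^2 * P$y$z) = (\<Sum>z\<in>UNIV. \<Sum>y\<in>UNIV. (v z)^2 * P$y$z)"
      by (rule sum.swap)
    finally show ?thesis by (simp add: sum_distrib_left)
  qed
  also have "\<dots> = (\<Sum>y\<in>UNIV. (v y)^2)"
  proof -
    have "(\<Sum>y\<in>UNIV. P$y$z) = 1" for z using rs sy by (metis (no_types, lifting) sum.cong)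
    then show ?thesis using rs by simp
  qed
  finally show ?thesis .
qed

lemma psd_trace:
  fixes P A :: "real^'n^'n"
  assumes nn: "\<forall>x y. P$x$y \<ge> 0" and rs: "\<forall>x. (\<Sum>y\<in>UNIV. P$x$y) = 1" and sy: "\<forall>x y. P$x$y = P$y$x"
  shows "trace (transpose A ** ((mat 1 - P) ** A)) \<ge> 0"
proof -
  have e: "((mat 1 - P) ** A) $ k $ i = A$k$i - (\<Sum>z\<in>UNIV. P$k$z * A$z$i)" for k i
    by (simp add: mm_diff_r)  (simp add: mult_entry)
  have "trace (transpose A ** ((mat 1 - P) ** A)) =
      (\<Sum>i\<in>UNIV. (\<Sum>k\<in>UNIV. (A$k$i)^2) - (\<Sum>k\<in>UNIV. \<Sum>z\<in>UNIV. P$k$z * (A$k$i * A$z$i)))"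
    unfolding trace_def
  proof (rule sum.cong[OF refl])
    fix i
    have "(transpose A ** ((mat 1 - P) ** A))$i$i = (\<Sum>k\<in>UNIV. transpose A $i$k * ((mat 1 - P) ** A)$k$i)"
      by (rule mult_entry)
    also have "\<dots> = (\<Sum>k\<in>UNIV. A$k$i * (A$k$i - (\<Sum>z\<in>UNIV. P$k$z * A$z$i)))"
      unfolding e by (simp add: transpose_def)
    also have "\<dots> = (\<Sum>k\<in>UNIV. (A$k$i)^2) - (\<Sum>k\<in>UNIV. \<Sum>z\<in>UNIV. P$k$z * (A$k$i * A$z$i))"
      by (simp add: right_diff_distrib sum_subtractf sum_distrib_left power2_eq_square mult_ac)
    finally show "(transpose A ** ((mat 1 - P) ** A))$i$i = (\<Sum>k\<in>UNIV. (A$k$i)^2) - (\<Sum>k\<in>UNIV. \<Sum>z\<in>UNIV. P$k$z * (A$k$i * A$z$i))" .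
  qed
  also have "\<dots> \<ge> 0"
    by (intro sum_nonneg) (simp add: quad_le[OF nn rs sy])
  finally show ?thesis .
qed


lemma matpow_add: "matpow A (a + b) = matpow A a ** matpow A b"
  by (induction a) (simp_all add: matrix_mul_assoc)

lemma matpow_comm: "A ** matpow A k = matpow A k ** A"
  by (induction k) (simp_all add: matrix_mul_assoc[symmetric], simp add: matrix_mul_assoc)

lemma transpose_matpow:
  fixes A :: "'a::comm_semiring_1^'n^'n"
  shows "transpose A = A \<Longrightarrow> transpose (matpow A k) = matpow A k"
  by (induction k) (simp_all add: matrix_transpose_mul matpow_comm)

lemma matpow_nonneg:
  fixes A :: "real^'n^'n"
  shows "\<forall>x y. A$x$y \<ge> 0 \<Longrightarrow> matpow A k $x$y \<ge> 0"
proof (induction k arbitrary: x y)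
  case 0 then show ?case by (simp add: mat_entry)
next
  case (Suc k) then show ?case by (simp add: mult_entry sum_nonneg)
qed

definition goodQ :: "real^'e::finite^'e \<Rightarrow> bool" where
  "goodQ Q \<longleftrightarrow> (\<forall>x y. Q$x$y \<ge> 0) \<and> (\<forall>x. (\<Sum>y\<in>UNIV. Q$x$y) = 1) \<and> (\<forall>x y. Q$x$y = Q$y$x) \<and> CARD('e) \<ge> 4"

lemma RR_entry: "RR Q $x$y = (if x = y then (real CARD('e) - 2) / real CARD('e) else 0) + 2 / real CARD('e) * Q$x$y"
  for Q :: "real^'e::finite^'e"
  by (simp add: RR_def mat_entry)

lemma RR_nonneg: "goodQ Q \<Longrightarrow> \<forall>x y. RR Q $x$y \<ge> 0"
  unfolding goodQ_def RR_entry by (auto intro!: add_nonneg_nonneg)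

lemma RR_sym: "goodQ Q \<Longrightarrow> transpose (RR Q) = RR Q"
  unfolding goodQ_def by (simp add: vec_eq_iff transpose_def RR_entry)

lemma DD_RR: "DD Q = (real CARD('e) / 2) *\<^sub>R (mat 1 - RR Q)"
  for Q :: "real^'e::finite^'e"
  by (simp add: vec_eq_iff DD_def RR_entry mat_entry field_simps)

lemma DD_RR_mult: "DD Q ** RR Q = ((real CARD('e) - 4) / real CARD('e)) *\<^sub>R (mat 1 - Q) + (2 / real CARD('e)) *\<^sub>R (mat 1 - Q ** Q)"
  for Q :: "real^'e::finite^'e"
proof -
  define N where "N = real CARD('e)"
  have N: "N > 0" by (simp add: N_def)
  have "DD Q ** RR Q = ((N-2)/N) *\<^sub>R (mat 1 - Q) + (2/N) *\<^sub>R (Q - Q ** Q)"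
    unfolding DD_def RR_def N_def
    by (simp add: mm_diff_r matrix_add_ldistrib matrix_scalar_ac scalar_matrix_assoc[symmetric] algebra_simps)
  also have "\<dots> = ((N - 4) / N) *\<^sub>R (mat 1 - Q) + (2 / N) *\<^sub>R (mat 1 - Q ** Q)"
  proof -
    have "(N-2)/N = (N-4)/N + 2/N" using N by (simp add: field_simps)
    then show ?thesis by (simp add: algebra_simps)
  qed
  finally show ?thesis unfolding N_def .
qed

lemma QQ_props:
  assumes "goodQ Q"
  shows "\<forall>x y. (Q**Q)$x$y \<ge> 0" "\<forall>x. (\<Sum>y\<in>UNIV. (Q**Q)$x$y) = 1" "\<forall>x y. (Q**Q)$x$y = (Q**Q)$y$x"
proof -
  have nn: "\<forall>x y. Q$x$y \<ge> 0" and rs: "\<forall>x. (\<Sum>y\<in>UNIV. Q$x$y) = 1" and sy: "\<forall>x y. Q$x$y = Q$y$x"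
    using assms by (auto simp: goodQ_def)
  show "\<forall>x y. (Q**Q)$x$y \<ge> 0" using nn by (simp add: mult_entry sum_nonneg)
  show "\<forall>x. (\<Sum>y\<in>UNIV. (Q**Q)$x$y) = 1"
  proof
    fix x
    have "(\<Sum>y\<in>UNIV. (Q**Q)$x$y) = (\<Sum>k\<in>UNIV. Q$x$k * (\<Sum>y\<in>UNIV. Q$k$y))"
      by (simp add: mult_entry sum_distrib_left) (rule sum.swap)
    then show "(\<Sum>y\<in>UNIV. (Q**Q)$x$y) = 1" using rs by simp
  qed
  show "\<forall>x y. (Q**Q)$x$y = (Q**Q)$y$x"
    using sy by (simp add: mult_entry mult.commute)
qed

lemma ww_nonneg:
  fixes Q :: "real^'e::finite^'e"
  assumes g: "goodQ Q"
  shows "ww Q m \<ge> 0"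
proof -
  have nn: "\<forall>x y. Q$x$y \<ge> 0" and rs: "\<forall>x. (\<Sum>y\<in>UNIV. Q$x$y) = 1" and sy: "\<forall>x y. Q$x$y = Q$y$x"
    using g by (auto simp: goodQ_def)
  obtain k where "m = k + k \<or> m = Suc (k + k)"
  proof -
    have "m = m div 2 + m div 2 \<or> m = Suc (m div 2 + m div 2)" by presburger
    then show ?thesis using that by blast
  qed
  then show ?thesis
  proof
    assume m: "m = k + k"
    let ?X = "matpow (RR Q) k"
    have "ww Q m = trace ((DD Q ** ?X) ** ?X)"
      by (simp add: ww_def m matpow_add matrix_mul_assoc)
    also have "\<dots> = trace (?X ** (DD Q ** ?X))"
      by (rule trace_mul_sym)
    also have "\<dots> = trace (transpose ?X ** ((mat 1 - Q) ** ?X))"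
      by (simp only: transpose_matpow[OF RR_sym[OF g]] DD_def)
    finally show ?thesis using psd_trace[OF nn rs sy] by simp
  next
    assume m: "m = Suc (k + k)"
    let ?X = "matpow (RR Q) k"
    define c1 where "c1 = (real CARD('e) - 4) / real CARD('e)"
    define c2 where "c2 = 2 / real CARD('e)"
    have c: "c1 \<ge> 0" "c2 \<ge> 0" using g by (auto simp: c1_def c2_def goodQ_def)
    have "ww Q m = trace (((DD Q ** RR Q) ** ?X) ** ?X)"
      by (simp add: ww_def m matpow_add matrix_mul_assoc)
    also have "\<dots> = trace (?X ** ((DD Q ** RR Q) ** ?X))"
      by (rule trace_mul_sym)
    also have "\<dots> = trace (transpose ?X ** ((DD Q ** RR Q) ** ?X))"
      by (simp only: transpose_matpow[OF RR_sym[OF g]])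
    also have "\<dots> = c1 * trace (transpose ?X ** ((mat 1 - Q) ** ?X)) + c2 * trace (transpose ?X ** ((mat 1 - Q ** Q) ** ?X))"
      unfolding DD_RR_mult c1_def[symmetric] c2_def[symmetric]
      by (simp add: mm_add_r matrix_add_ldistrib matrix_scalar_ac scalar_matrix_assoc[symmetric] trace_add trace_scaleR)
    finally show ?thesis using psd_trace[OF nn rs sy] psd_trace[OF QQ_props[OF g]] c by simp
  qed
qed


lemma ww_tele: "ww Q m = (real CARD('e) / 2) * (trace (matpow (RR Q) m) - trace (matpow (RR Q) (Suc m)))"
  for Q :: "real^'e::finite^'e"
  unfolding ww_def DD_RR
  by (simp add: scalar_matrix_assoc[symmetric] mm_diff_r trace_scaleR trace_sub)

lemma sum_ww: "(\<Sum>m<M. ww Q m) = (real CARD('e) / 2) * (real CARD('e) - trace (matpow (RR Q) M))"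
  for Q :: "real^'e::finite^'e"
proof -
  have "(\<Sum>m<M. ww Q m) = (real CARD('e) / 2) * (\<Sum>m<M. trace (matpow (RR Q) m) - trace (matpow (RR Q) (Suc m)))"
    by (simp add: ww_tele sum_distrib_left)
  also have "\<dots> = (real CARD('e) / 2) * (real CARD('e) - trace (matpow (RR Q) M))"
    by (subst sum_lessThan_telescope') (simp add: trace_I)
  finally show ?thesis .
qed

lemma sum_ww_le:
  fixes Q :: "real^'e::finite^'e"
  assumes g: "goodQ Q"
  shows "(\<Sum>m<M. ww Q m) \<le> (real CARD('e))^2 / 2"
proof -
  have "trace (matpow (RR Q) M) \<ge> 0"
    unfolding trace_def using matpow_nonneg[OF RR_nonneg[OF g]] by (simp add: sum_nonneg)
  then show ?thesis by (simp add: sum_ww power2_eq_square mult_left_le)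
qed

lemma cc_bound:
  fixes Q :: "real^'e::finite^'e"
  assumes g: "goodQ Q"
  shows "\<bar>cc Q n\<bar> \<le> 2 * (real n + 1) / (real CARD('e))^2"
proof (induction n rule: less_induct)
  case (less n)
  define N where "N = real CARD('e)"
  have N: "N > 0" by (simp add: N_def)
  have "\<bar>\<Sum>k<n. cc Q k * ww Q (n - 1 - k)\<bar> \<le> (\<Sum>k<n. \<bar>cc Q k\<bar> * ww Q (n - 1 - k))"
    by (rule order_trans[OF sum_abs]) (simp add: abs_mult ww_nonneg[OF g])
  also have "\<dots> \<le> (\<Sum>k<n. (2 * real n / N^2) * ww Q (n - 1 - k))"
  proof (rule sum_mono)
    fix k assume k: "k \<in> {..<n}"
    have "\<bar>cc Q k\<bar> \<le> 2 * (real k + 1) / N^2" using less k by (simp add: N_def)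
    also have "\<dots> \<le> 2 * real n / N^2" using k N by (simp add: divide_right_mono)
    finally show "\<bar>cc Q k\<bar> * ww Q (n - 1 - k) \<le> (2 * real n / N^2) * ww Q (n - 1 - k)"
      by (rule mult_right_mono) (simp add: ww_nonneg[OF g])
  qed
  also have "\<dots> = (2 * real n / N^2) * (\<Sum>k<n. ww Q k)"
  proof -
    have "(\<Sum>k<n. ww Q (n - 1 - k)) = (\<Sum>k<n. ww Q (n - Suc k))" by simp
    also have "\<dots> = (\<Sum>k<n. ww Q k)" by (rule sum.nat_diff_reindex)
    finally show ?thesis by (simp only: sum_distrib_left[symmetric])
  qed
  also have "\<dots> \<le> (2 * real n / N^2) * (N^2 / 2)"
    using sum_ww_le[OF g, of n] N by (intro mult_left_mono) (simp_all add: N_def)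
  also have "\<dots> = real n" using N by simp
  finally have b: "\<bar>\<Sum>k<n. cc Q k * ww Q (n - 1 - k)\<bar> \<le> real n" .
  have "\<bar>cc Q n\<bar> = 2 / N^2 * \<bar>1 + (\<Sum>k<n. cc Q k * ww Q (n - 1 - k))\<bar>"
    by (subst cc_PP) (simp only: trace_PP_closed N_def abs_mult abs_divide abs_of_nonneg zero_le_divide_iff zero_le_power2 zero_le_numeral)
  also have "\<dots> \<le> 2 / N^2 * (1 + real n)"
    using b by (intro mult_left_mono) auto
  finally show ?case by (simp add: N_def algebra_simps)
qed


lemma B_step:
  fixes Q :: "real^'e::finite^'e"
  assumes N4: "CARD('e) \<ge> 4"
  shows "(\<Sum>s\<le>Suc n. \<bar>alpha Q (Suc n) s\<bar>) \<le> 2 * \<bar>cc Q n\<bar> + (\<Sum>s\<le>n. \<bar>alpha Q n s\<bar>)"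
proof -
  define N where "N = real CARD('e)"
  have N: "N \<ge> 4" using N4 by (simp add: N_def)
  have "(\<Sum>s\<le>Suc n. \<bar>alpha Q (Suc n) s\<bar>) \<le>
     (\<Sum>s\<le>Suc n. \<bar>cc Q n\<bar> * (if s = 0 then 1 else if s = 1 then 1 else 0))
   + (\<Sum>s\<le>Suc n. (N - 2) / N * \<bar>alpha Q n s\<bar>)
   + (\<Sum>s\<le>Suc n. (if s = 0 then 0 else 2 / N * \<bar>alpha Q n (s - 1)\<bar>))"
    unfolding sum.distrib[symmetric]
  proof (rule sum_mono)
    fix s
    have "\<bar>alpha Q (Suc n) s\<bar> \<le> \<bar>cc Q n * (if s = 0 then 1 else if s = 1 then -1 else 0)\<bar>
        + \<bar>(N - 2) / N * alpha Q n s\<bar> + \<bar>(if s = 0 then 0 else 2 / N * alpha Q n (s - 1))\<bar>"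
      unfolding alpha_rec N_def[symmetric] by (rule order_trans[OF abs_triangle_ineq add_right_mono[OF abs_triangle_ineq]])
    also have "\<dots> = \<bar>cc Q n\<bar> * (if s = 0 then 1 else if s = 1 then 1 else 0) + (N - 2) / N * \<bar>alpha Q n s\<bar>
        + (if s = 0 then 0 else 2 / N * \<bar>alpha Q n (s - 1)\<bar>)"
      using N by (simp add: abs_mult)
    finally show "\<bar>alpha Q (Suc n) s\<bar> \<le> \<bar>cc Q n\<bar> * (if s = 0 then 1 else if s = 1 then 1 else 0) + (N - 2) / N * \<bar>alpha Q n s\<bar>
        + (if s = 0 then 0 else 2 / N * \<bar>alpha Q n (s - 1)\<bar>)" .
  qed
  also have "(\<Sum>s\<le>Suc n. \<bar>cc Q n\<bar> * (if s = 0 then 1 else if s = 1 then 1 else 0)) = 2 * \<bar>cc Q n\<bar>"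
  proof -
    have "(\<Sum>s\<le>n. \<bar>cc Q n\<bar> * (if Suc s = 1 then 1 else 0)) = (\<Sum>s\<le>n. if s = 0 then \<bar>cc Q n\<bar> else 0)"
      by (rule sum.cong) auto
    also have "\<dots> = \<bar>cc Q n\<bar>" by (simp add: sum.delta)
    finally show ?thesis by (subst sum.atMost_Suc_shift) simp
  qed
  also have "(\<Sum>s\<le>Suc n. (N - 2) / N * \<bar>alpha Q n s\<bar>) = (N - 2) / N * (\<Sum>s\<le>n. \<bar>alpha Q n s\<bar>)"
    by (simp add: alpha_def alpha_zero sum_distrib_left)
  also have "(\<Sum>s\<le>Suc n. (if s = 0 then 0 else 2 / N * \<bar>alpha Q n (s - 1)\<bar>)) = 2 / N * (\<Sum>s\<le>n. \<bar>alpha Q n s\<bar>)"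
    by (subst sum.atMost_Suc_shift) (simp add: sum_distrib_left)
  also have "2 * \<bar>cc Q n\<bar> + (N - 2) / N * (\<Sum>s\<le>n. \<bar>alpha Q n s\<bar>) + 2 / N * (\<Sum>s\<le>n. \<bar>alpha Q n s\<bar>)
     = 2 * \<bar>cc Q n\<bar> + (\<Sum>s\<le>n. \<bar>alpha Q n s\<bar>)"
    using N by (simp add: field_simps)
  finally show ?thesis .
qed

lemma B_bound:
  fixes Q :: "real^'e::finite^'e"
  assumes g: "goodQ Q"
  shows "(\<Sum>s\<le>n. \<bar>alpha Q n s\<bar>) \<le> real (n * (n + 1))"
proof (induction n)
  case 0 then show ?case by (simp add: alpha_def)
next
  case (Suc n)
  have N4: "CARD('e) \<ge> 4" using g by (simp add: goodQ_def)
  have "\<bar>cc Q n\<bar> \<le> 2 * (real n + 1) / (real CARD('e))^2" by (rule cc_bound[OF g])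
  also have "\<dots> \<le> real n + 1"
  proof -
    have "(4::real)^2 \<le> (real CARD('e))^2" by (rule power_mono) (use N4 in auto)
    then have "(real CARD('e))^2 \<ge> 2" by simp
    then have "2 * (real n + 1) \<le> (real n + 1) * (real CARD('e))^2"
      by (metis mult.commute mult_left_mono of_nat_0_le_iff add_nonneg_nonneg zero_le_one)
    then show ?thesis by (simp add: field_simps)
  qed
  finally have "\<bar>cc Q n\<bar> \<le> real n + 1" .
  then show ?case using B_step[OF N4, of Q n] Suc.IH by (simp add: algebra_simps)
qed


lemma summable_poly2:
  fixes x :: real
  assumes "\<bar>x\<bar> < 1"
  shows "summable (\<lambda>n. real (Suc n) * real (Suc (Suc n)) * x ^ n)"
proof -
  have s1: "summable (\<lambda>n. real (Suc n) * y ^ n)" if "norm y < 1" for y :: real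
  proof -
    have "summable (\<lambda>n. diffs (\<lambda>_. 1::real) n * y ^ n)"
      by (rule termdiff_converges[of y 1]) (use that summable_geometric in auto)
    then show ?thesis by (simp add: diffs_def)
  qed
  have "summable (\<lambda>n. diffs (\<lambda>n. real (Suc n)) n * x ^ n)"
    by (rule termdiff_converges[of x 1]) (use assms s1 in auto)
  then show ?thesis by (simp add: diffs_def mult.assoc)
qed

lemma gen_shift:
  fixes z :: complex
  assumes sa: "summable (\<lambda>n. z^n * a n)" and sh: "summable (\<lambda>n. z^n * h n)"
    and a0: "a 0 = 0" and as: "\<And>n. a (Suc n) = h n"
  shows "(\<Sum>n. z^n * a n) = z * (\<Sum>n. z^n * h n)"
proof -
  have "(\<Sum>n. z^Suc n * a (Suc n)) = (\<Sum>n. z^n * a n) - z^0 * a 0"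
    by (rule suminf_split_head[OF sa])
  moreover have "(\<Sum>n. z^Suc n * a (Suc n)) = z * (\<Sum>n. z^n * h n)"
    unfolding as by (subst suminf_mult[OF sh, symmetric]) (simp add: mult.assoc)
  ultimately show ?thesis using a0 by simp
qed

lemma matpow_rows:
  fixes A :: "real^'n^'n"
  assumes nn: "\<forall>x y. A$x$y \<ge> 0" and rs: "\<forall>x. (\<Sum>y\<in>UNIV. A$x$y) = 1"
  shows "(\<Sum>y\<in>UNIV. matpow A k $x$y) = 1"
proof (induction k arbitrary: x)
  case 0 then show ?case by (simp add: mat_entry)
next
  case (Suc k)
  have "(\<Sum>y\<in>UNIV. matpow A (Suc k) $x$y) = (\<Sum>j\<in>UNIV. A$x$j * (\<Sum>y\<in>UNIV. matpow A k $j$y))"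
    by (simp add: mult_entry sum_distrib_left) (rule sum.swap)
  then show ?case using Suc.IH rs by simp
qed

lemma matpow_le1:
  fixes A :: "real^'n^'n"
  assumes nn: "\<forall>x y. A$x$y \<ge> 0" and rs: "\<forall>x. (\<Sum>y\<in>UNIV. A$x$y) = 1"
  shows "matpow A k $x$y \<le> 1"
proof -
  have "matpow A k $x$y \<le> (\<Sum>y\<in>UNIV. matpow A k $x$y)"
    by (rule member_le_sum) (auto intro: matpow_nonneg[OF nn])
  then show ?thesis using matpow_rows[OF nn rs] by simp
qed

lemma PP_entry_bound:
  fixes Q :: "real^'e::finite^'e"
  assumes g: "goodQ Q"
  shows "\<bar>PP Q n $i$j\<bar> \<le> real (n * (n + 1))"
proof -
  have nn: "\<forall>x y. Q$x$y \<ge> 0" and rs: "\<forall>x. (\<Sum>y\<in>UNIV. Q$x$y) = 1"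
    using g by (auto simp: goodQ_def)
  have "\<bar>PP Q n $i$j\<bar> = \<bar>\<Sum>s\<le>n. alpha Q n s * matpow Q s $i$j\<bar>"
    by (simp add: PP_def sum_component)
  also have "\<dots> \<le> (\<Sum>s\<le>n. \<bar>alpha Q n s\<bar>)"
  proof (rule order_trans[OF sum_abs sum_mono])
    fix s
    have "\<bar>matpow Q s $i$j\<bar> \<le> 1" using matpow_nonneg[OF nn] matpow_le1[OF nn rs] by (simp add: abs_le_iff)
    then show "\<bar>alpha Q n s * matpow Q s $i$j\<bar> \<le> \<bar>alpha Q n s\<bar>"
      by (simp add: abs_mult mult_left_le)
  qed
  also have "\<dots> \<le> real (n * (n + 1))" by (rule B_bound[OF g])
  finally show ?thesis .
qed


lemma cc_bound1:
  fixes Q :: "real^'e::finite^'e"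
  assumes g: "goodQ Q"
  shows "\<bar>cc Q n\<bar> \<le> real n + 1"
proof -
  have N4: "CARD('e) \<ge> 4" using g by (simp add: goodQ_def)
  have "\<bar>cc Q n\<bar> \<le> 2 * (real n + 1) / (real CARD('e))^2" by (rule cc_bound[OF g])
  also have "\<dots> \<le> real n + 1"
  proof -
    have "(4::real)^2 \<le> (real CARD('e))^2" by (rule power_mono) (use N4 in auto)
    then have "(real CARD('e))^2 \<ge> 2" by simp
    then have "2 * (real n + 1) \<le> (real n + 1) * (real CARD('e))^2"
      by (metis mult.commute mult_left_mono of_nat_0_le_iff add_nonneg_nonneg zero_le_one)
    then show ?thesis by (simp add: field_simps)
  qed
  finally show ?thesis .
qed

definition MM :: "real^'e::finite^'e \<Rightarrow> complex \<Rightarrow> complex^'e^'e" where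
  "MM Q z = mat (of_nat CARD('e)) - mat z ** (mat (of_nat CARD('e) - 2) + mat 2 ** complex_mat Q)"

lemma MM_entry: "MM Q z $i$k = (if i = k then of_nat CARD('e) else 0) - z * ((if i = k then of_nat CARD('e) - 2 else 0) + 2 * complex_of_real (Q$i$k))"
  for Q :: "real^'e::finite^'e"
  by (simp add: MM_def mat_entry mat_mult_entry complex_mat_def)

lemma MM_entry2: "MM Q z $i$k = (if i = k then of_nat CARD('e) - z * (of_nat CARD('e) - 2) else 0) - 2 * z * complex_of_real (Q$i$k)"
  for Q :: "real^'e::finite^'e"
  by (simp add: MM_entry algebra_simps)

lemma MM_inv:
  fixes Q :: "real^'e::finite^'e"
  assumes g: "goodQ Q" and z: "norm z < 1"
  shows "matrix_inv (MM Q z) ** MM Q z = mat 1"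
proof -
  define N where "N = real CARD('e)"
  have nn: "\<forall>x y. Q$x$y \<ge> 0" and rs: "\<forall>x. (\<Sum>y\<in>UNIV. Q$x$y) = 1" and N4: "N \<ge> 4"
    using g by (auto simp: goodQ_def N_def)
  have zero: "v = 0" if v: "MM Q z *v v = 0" for v :: "complex^'e"
  proof -
    have "Max (range (\<lambda>i. norm (v$i))) \<in> range (\<lambda>i. norm (v$i))" by (rule Max_in) auto
    then obtain i0 where i0m: "norm (v$i0) = Max (range (\<lambda>i. norm (v$i)))" by (metis (no_types, lifting) imageE)
    have i0: "\<forall>i. norm (v$i) \<le> norm (v$i0)" unfolding i0m by (auto intro: Max_ge)
    have "(MM Q z *v v) $ i0 = complex_of_real N * v$i0 - z * (complex_of_real (N - 2) * v$i0 + 2 * (\<Sum>k\<in>UNIV. complex_of_real (Q$i0$k) * v$k))"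
    proof -
      have "(MM Q z *v v) $ i0 = (\<Sum>k\<in>UNIV. (if i0 = k then of_nat CARD('e) - z * (of_nat CARD('e) - 2) else 0) * v$k)
          - (\<Sum>k\<in>UNIV. 2 * z * complex_of_real (Q$i0$k) * v$k)"
        by (simp add: matrix_vector_mult_def MM_entry2 left_diff_distrib sum_subtractf)
      also have "\<dots> = (of_nat CARD('e) - z * (of_nat CARD('e) - 2)) * v$i0 - 2 * z * (\<Sum>k\<in>UNIV. complex_of_real (Q$i0$k) * v$k)"
      proof -
        have "(\<Sum>k\<in>UNIV. (if i0 = k then of_nat CARD('e) - z * (of_nat CARD('e) - 2) else 0) * v$k)
           = (\<Sum>k\<in>UNIV. if i0 = k then (of_nat CARD('e) - z * (of_nat CARD('e) - 2)) * v$k else 0)"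
          by (rule sum.cong) auto
        then show ?thesis by (simp add: sum_distrib_left mult.assoc)
      qed
      finally show ?thesis by (simp add: N_def algebra_simps)
    qed
    then have eq: "complex_of_real N * v$i0 = z * (complex_of_real (N - 2) * v$i0 + 2 * (\<Sum>k\<in>UNIV. complex_of_real (Q$i0$k) * v$k))"
      using v by simp
    have "norm (\<Sum>k\<in>UNIV. complex_of_real (Q$i0$k) * v$k) \<le> (\<Sum>k\<in>UNIV. Q$i0$k * norm (v$i0))"
      by (rule order_trans[OF norm_sum sum_mono]) (simp add: norm_mult nn mult_left_mono i0)
    also have "\<dots> = norm (v$i0)" using rs by (simp add: sum_distrib_right[symmetric])
    finally have s: "norm (\<Sum>k\<in>UNIV. complex_of_real (Q$i0$k) * v$k) \<le> norm (v$i0)" .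
    have "N * norm (v$i0) = norm z * norm (complex_of_real (N - 2) * v$i0 + 2 * (\<Sum>k\<in>UNIV. complex_of_real (Q$i0$k) * v$k))"
      using arg_cong[OF eq, of norm] N4 by (simp add: norm_mult)
    also have "\<dots> \<le> norm z * ((N - 2) * norm (v$i0) + 2 * norm (v$i0))"
    proof (rule mult_left_mono)
      have "norm (complex_of_real (N - 2) * v$i0 + 2 * (\<Sum>k\<in>UNIV. complex_of_real (Q$i0$k) * v$k))
          \<le> norm (complex_of_real (N - 2) * v$i0) + norm (2 * (\<Sum>k\<in>UNIV. complex_of_real (Q$i0$k) * v$k))"
        by (rule norm_triangle_ineq)
      also have "\<dots> \<le> (N - 2) * norm (v$i0) + 2 * norm (v$i0)"
      proof -
        have "cmod (complex_of_real N - 2) = N - 2"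
        proof -
          have "complex_of_real N - 2 = complex_of_real (N - 2)" by simp
          then have "cmod (complex_of_real N - 2) = \<bar>N - 2\<bar>" by (simp only: norm_of_real)
          then show ?thesis using N4 by simp
        qed
        then show ?thesis using s N4 by (simp add: norm_mult)
      qed
      finally show "norm (complex_of_real (N - 2) * v$i0 + 2 * (\<Sum>k\<in>UNIV. complex_of_real (Q$i0$k) * v$k))
          \<le> (N - 2) * norm (v$i0) + 2 * norm (v$i0)" .
    qed simp
    finally have "N * norm (v$i0) \<le> norm z * (N * norm (v$i0))" by (simp add: algebra_simps)
    then have "norm (v$i0) = 0"
      using z N4 by (smt (verit, best) mult_le_cancel_right1 mult_nonneg_nonneg norm_ge_zero)
    then show "v = 0" using i0 by (simp add: vec_eq_iff)
  qed
  have "inj (\<lambda>x. MM Q z *v x)"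
  proof (rule injI)
    fix x y assume "MM Q z *v x = MM Q z *v y"
    then have "MM Q z *v (x - y) = 0" by (simp add: matrix_vector_mult_diff_distrib)
    then show "x = y" using zero[of "x - y"] by simp
  qed
  then have "det (MM Q z) \<noteq> 0"
    using det_nz_iff_inj_gen[of "\<lambda>x. MM Q z *v x"] by (simp add: matrix_vector_mul_linear_gen)
  then have "invertible (MM Q z)" by (simp add: invertible_det_nz)
  then show ?thesis
    unfolding invertible_def matrix_inv_def by (metis (mono_tags, lifting) someI_ex)
qed


lemma alpha_sum_any:
  fixes Q :: "real^'e::finite^'e"
  assumes g: "goodQ Q" and S: "finite S"
  shows "(\<Sum>s\<in>S. \<bar>alpha Q n s\<bar>) \<le> real (Suc n) * real (Suc (Suc n))"
proof -
  have "(\<Sum>s\<in>S. \<bar>alpha Q n s\<bar>) = (\<Sum>s\<in>S \<inter> {..n}. \<bar>alpha Q n s\<bar>) + (\<Sum>s\<in>S - {..n}. \<bar>alpha Q n s\<bar>)"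
    using S by (rule sum.Int_Diff)
  also have "(\<Sum>s\<in>S - {..n}. \<bar>alpha Q n s\<bar>) = 0"
    by (rule sum.neutral) (auto simp: alpha_def alpha_zero)
  also have "(\<Sum>s\<in>S \<inter> {..n}. \<bar>alpha Q n s\<bar>) \<le> (\<Sum>s\<le>n. \<bar>alpha Q n s\<bar>)"
    by (rule sum_mono2) auto
  also have "\<dots> \<le> real (n * (n + 1))" by (rule B_bound[OF g])
  also have "\<dots> \<le> real (Suc n * Suc (Suc n))"
  proof -
    have "n * (n + 1) \<le> Suc n * Suc (Suc n)" by (intro mult_mono) auto
    then show ?thesis by (simp only: of_nat_le_iff)
  qed
  finally have "(\<Sum>s\<in>S. \<bar>alpha Q n s\<bar>) \<le> real (Suc n * Suc (Suc n))" by simp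
  then show ?thesis by (simp only: of_nat_mult)
qed

lemma double_summable:
  fixes Q :: "real^'e::finite^'e" and \<zeta> q :: complex
  assumes g: "goodQ Q" and z: "norm \<zeta> < 1" and q: "norm q \<le> 1"
  shows "(\<lambda>(n, s). norm (\<zeta>^n * q^s * complex_of_real (alpha Q n s))) summable_on (UNIV :: (nat \<times> nat) set)"
proof (rule nonneg_bdd_above_summable_on)
  define bb where "bb n = real (Suc n) * real (Suc (Suc n))" for n
  have sbb: "summable (\<lambda>n. bb n * norm \<zeta> ^ n)"
    unfolding bb_def by (rule summable_poly2) (use z in simp)
  let ?f = "\<lambda>(n, s). norm (\<zeta>^n * q^s * complex_of_real (alpha Q n s))"
  show "\<And>x. x \<in> UNIV \<Longrightarrow> 0 \<le> ?f x" by auto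
  show "bdd_above (sum ?f ` {F. F \<subseteq> UNIV \<and> finite F})"
  proof (rule bdd_aboveI2)
    fix F :: "(nat \<times> nat) set" assume "F \<in> {F. F \<subseteq> UNIV \<and> finite F}"
    then have F: "finite F" by simp
    obtain K1 where K1: "\<forall>x\<in>fst ` F. x \<le> K1" using F finite_nat_set_iff_bounded_le by blast
    obtain K2 where K2: "\<forall>x\<in>snd ` F. x \<le> K2" using F finite_nat_set_iff_bounded_le by blast
    define K where "K = max K1 K2"
    have sub: "F \<subseteq> {..K} \<times> {..K}" using K1 K2 by (force simp: K_def)
    have "sum ?f F \<le> sum ?f ({..K} \<times> {..K})"
      by (rule sum_mono2[OF _ sub]) auto
    also have "\<dots> = (\<Sum>n\<le>K. \<Sum>s\<le>K. norm \<zeta> ^ n * (norm q ^ s * \<bar>alpha Q n s\<bar>))"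
      by (simp add: sum.cartesian_product norm_mult norm_power mult.assoc)
    also have "\<dots> \<le> (\<Sum>n\<le>K. norm \<zeta> ^ n * bb n)"
    proof (rule sum_mono)
      fix n
      have "(\<Sum>s\<le>K. norm \<zeta> ^ n * (norm q ^ s * \<bar>alpha Q n s\<bar>)) \<le> (\<Sum>s\<le>K. norm \<zeta> ^ n * \<bar>alpha Q n s\<bar>)"
      proof (rule sum_mono, rule mult_left_mono)
        fix s
        have "norm q ^ s \<le> 1" using q by (simp add: power_le_one)
        then show "norm q ^ s * \<bar>alpha Q n s\<bar> \<le> \<bar>alpha Q n s\<bar>" by (simp add: mult_left_le_one_le)
      qed simp
      also have "\<dots> = norm \<zeta> ^ n * (\<Sum>s\<le>K. \<bar>alpha Q n s\<bar>)" by (simp add: sum_distrib_left)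
      also have "\<dots> \<le> norm \<zeta> ^ n * bb n"
        unfolding bb_def by (rule mult_left_mono) (use alpha_sum_any[OF g, of "{..K}" n] in simp_all)
      finally show "(\<Sum>s\<le>K. norm \<zeta> ^ n * (norm q ^ s * \<bar>alpha Q n s\<bar>)) \<le> norm \<zeta> ^ n * bb n" .
    qed
    also have "\<dots> \<le> (\<Sum>n. bb n * norm \<zeta> ^ n)"
      using sum_le_suminf[OF sbb, of "{..K}"] by (simp add: mult.commute bb_def)
    finally show "sum ?f F \<le> (\<Sum>n. bb n * norm \<zeta> ^ n)" .
  qed
qed


lemma summable_bb:
  fixes \<zeta> :: complex and a :: "nat \<Rightarrow> complex"
  assumes z: "norm \<zeta> < 1" and b: "\<And>n. norm (a n) \<le> real (Suc n) * real (Suc (Suc n))"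
  shows "summable (\<lambda>n. \<zeta>^n * a n)"
proof (rule summable_comparison_test)
  show "summable (\<lambda>n. real (Suc n) * real (Suc (Suc n)) * norm \<zeta> ^ n)"
    by (rule summable_poly2) (use z in simp)
  show "\<exists>N. \<forall>n\<ge>N. norm (\<zeta>^n * a n) \<le> real (Suc n) * real (Suc (Suc n)) * norm \<zeta> ^ n"
  proof (intro exI allI impI)
    fix n :: nat
    show "norm (\<zeta>^n * a n) \<le> real (Suc n) * real (Suc (Suc n)) * norm \<zeta> ^ n"
      using mult_left_mono[OF b[of n], of "norm \<zeta> ^ n"] by (simp add: norm_mult norm_power mult_ac)
  qed
qed

lemma G_eq:
  fixes Q :: "real^'e::finite^'e" and \<zeta> q :: complex
  assumes g: "goodQ Q" and z: "norm \<zeta> < 1" and q: "norm q \<le> 1"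
  shows "summable (\<lambda>n. \<zeta>^n * complex_of_real (cc Q n))"
    "Galpha Q \<zeta> q = \<zeta> * ((1 - q) * (\<Sum>n. \<zeta>^n * complex_of_real (cc Q n)) + ((of_nat CARD('e) - 2 + 2 * q) / of_nat CARD('e)) * Galpha Q \<zeta> q)"
proof -
  define N where "N = real CARD('e)"
  have N: "N > 0" by (simp add: N_def)
  define A where "A n = (\<Sum>s\<le>n. q^s * complex_of_real (alpha Q n s))" for n
  have inner: "(\<Sum>s. q^s * complex_of_real (alpha Q n s)) = A n" for n
    unfolding A_def by (rule suminf_finite) (auto simp: alpha_def alpha_zero)
  have Gd: "Galpha Q \<zeta> q = (\<Sum>n. \<zeta>^n * A n)" by (simp add: Galpha_def inner)
  have Abd: "norm (A n) \<le> real (Suc n) * real (Suc (Suc n))" for n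
  proof -
    have "norm (A n) \<le> (\<Sum>s\<le>n. norm (q^s * complex_of_real (alpha Q n s)))"
      unfolding A_def by (rule norm_sum)
    also have "\<dots> \<le> (\<Sum>s\<le>n. \<bar>alpha Q n s\<bar>)"
    proof (rule sum_mono)
      fix s
      have "norm q ^ s \<le> 1" using q by (simp add: power_le_one)
      then show "norm (q^s * complex_of_real (alpha Q n s)) \<le> \<bar>alpha Q n s\<bar>"
        by (simp add: norm_mult norm_power mult_left_le_one_le)
    qed
    also have "\<dots> \<le> real (Suc n) * real (Suc (Suc n))" by (rule alpha_sum_any[OF g]) simp
    finally show ?thesis .
  qed
  have lin: "linear (\<lambda>w::complex. q * w)"
    by (rule linearI) (simp_all add: algebra_simps scaleR_conv_of_real)
  have conv: "(\<Sum>s\<le>n. alpha Q n s *\<^sub>R q^s) = A n" for n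
    unfolding A_def by (simp add: scaleR_conv_of_real mult.commute)
  have Arec: "A (Suc n) = (1 - q) * complex_of_real (cc Q n) + ((of_nat CARD('e) - 2 + 2 * q) / of_nat CARD('e)) * A n" for n
  proof -
    have "A (Suc n) = cc Q n *\<^sub>R (1 - q) + ((N-2)/N) *\<^sub>R A n + (2/N) *\<^sub>R (q * A n)"
      using poly_step[OF lin, of "\<lambda>s. q^s" Q n] unfolding conv N_def by simp
    also have "\<dots> = (1 - q) * complex_of_real (cc Q n) + ((of_nat CARD('e) - 2 + 2 * q) / of_nat CARD('e)) * A n"
      using N by (simp add: scaleR_conv_of_real N_def field_simps)
    finally show ?thesis .
  qed
  show sc: "summable (\<lambda>n. \<zeta>^n * complex_of_real (cc Q n))"
  proof (rule summable_bb[OF z])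
    fix n
    have "\<bar>cc Q n\<bar> \<le> real n + 1" by (rule cc_bound1[OF g])
    also have "\<dots> \<le> real (Suc n) * real (Suc (Suc n))"
    proof -
      have "(real n + 1) * 1 \<le> (real n + 1) * (real n + 2)" by (rule mult_left_mono) auto
      then show ?thesis by (simp add: algebra_simps)
    qed
    finally show "norm (complex_of_real (cc Q n)) \<le> real (Suc n) * real (Suc (Suc n))" by simp
  qed
  have sA: "summable (\<lambda>n. \<zeta>^n * A n)" by (rule summable_bb[OF z Abd])
  define r where "r = (of_nat CARD('e) - 2 + 2 * q) / (of_nat CARD('e) :: complex)"
  have "(\<Sum>n. \<zeta>^n * A n) = \<zeta> * (\<Sum>n. \<zeta>^n * ((1 - q) * complex_of_real (cc Q n) + r * A n))"
  proof (rule gen_shift[OF sA])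
    show "summable (\<lambda>n. \<zeta>^n * ((1 - q) * complex_of_real (cc Q n) + r * A n))"
      unfolding distrib_left
      using summable_mult[OF sc, of "1 - q"] summable_mult[OF sA, of r]
      by (intro summable_add) (simp_all add: mult_ac)
    show "A 0 = 0" by (simp add: A_def alpha_def)
    show "A (Suc n) = (1 - q) * complex_of_real (cc Q n) + r * A n" for n by (simp add: Arec r_def)
  qed
  also have "(\<Sum>n. \<zeta>^n * ((1 - q) * complex_of_real (cc Q n) + r * A n))
     = (1 - q) * (\<Sum>n. \<zeta>^n * complex_of_real (cc Q n)) + r * (\<Sum>n. \<zeta>^n * A n)"
  proof -
    have "(\<Sum>n. \<zeta>^n * ((1 - q) * complex_of_real (cc Q n) + r * A n))
       = (\<Sum>n. (1 - q) * (\<zeta>^n * complex_of_real (cc Q n)) + r * (\<zeta>^n * A n))"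
      by (simp add: algebra_simps)
    also have "\<dots> = (\<Sum>n. (1 - q) * (\<zeta>^n * complex_of_real (cc Q n))) + (\<Sum>n. r * (\<zeta>^n * A n))"
      by (rule suminf_add[symmetric]) (intro summable_mult sc sA)+
    also have "\<dots> = (1 - q) * (\<Sum>n. \<zeta>^n * complex_of_real (cc Q n)) + r * (\<Sum>n. \<zeta>^n * A n)"
      by (simp add: suminf_mult[OF sc] suminf_mult[OF sA])
    finally show ?thesis .
  qed
  finally show "Galpha Q \<zeta> q = \<zeta> * ((1 - q) * (\<Sum>n. \<zeta>^n * complex_of_real (cc Q n)) + ((of_nat CARD('e) - 2 + 2 * q) / of_nat CARD('e)) * Galpha Q \<zeta> q)"
    unfolding Gd r_def .
qed


lemma E_eq:
  fixes Q :: "real^'e::finite^'e" and \<zeta> :: complex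
  assumes g: "goodQ Q" and z: "norm \<zeta> < 1"
  defines "C \<equiv> (\<Sum>n. \<zeta>^n * complex_of_real (cc Q n))"
  defines "E \<equiv> (\<lambda>i j. \<Sum>n. \<zeta>^n * complex_of_real (PP Q n $i$j))"
  shows "E i j = \<zeta> * (C * complex_of_real (DD Q $i$j) + (\<Sum>k\<in>UNIV. complex_of_real (RR Q $i$k) * E k j))"
    and "C = 2 / (of_nat CARD('e))^2 * (1 / (1 - \<zeta>) + (\<Sum>i\<in>UNIV. E i i))"
proof -
  have sE: "summable (\<lambda>n. \<zeta>^n * complex_of_real (PP Q n $i$j))" for i j
  proof (rule summable_bb[OF z])
    fix n
    have "\<bar>PP Q n $i$j\<bar> \<le> real (n * (n + 1))" by (rule PP_entry_bound[OF g])
    also have "\<dots> \<le> real (Suc n * Suc (Suc n))"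
    proof -
      have "n * (n + 1) \<le> Suc n * Suc (Suc n)" by (intro mult_mono) auto
      then show ?thesis by (simp only: of_nat_le_iff)
    qed
    finally show "norm (complex_of_real (PP Q n $i$j)) \<le> real (Suc n) * real (Suc (Suc n))" by (simp only: norm_of_real of_nat_mult)
  qed
  have sc: "summable (\<lambda>n. \<zeta>^n * complex_of_real (cc Q n))"
    by (rule G_eq(1)[OF g z, of 0]) simp
  have "E i j = \<zeta> * (\<Sum>n. \<zeta>^n * (complex_of_real (cc Q n) * complex_of_real (DD Q $i$j)
      + (\<Sum>k\<in>UNIV. complex_of_real (RR Q $i$k) * complex_of_real (PP Q n $k$j))))"
    unfolding E_def
  proof (rule gen_shift[OF sE])
    show "summable (\<lambda>n. \<zeta>^n * (complex_of_real (cc Q n) * complex_of_real (DD Q $i$j)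
      + (\<Sum>k\<in>UNIV. complex_of_real (RR Q $i$k) * complex_of_real (PP Q n $k$j))))"
      unfolding distrib_left sum_distrib_left
    proof (intro summable_add summable_sum)
      show "summable (\<lambda>n. \<zeta>^n * (complex_of_real (cc Q n) * complex_of_real (DD Q $i$j)))"
        using summable_mult2[OF sc, of "complex_of_real (DD Q $i$j)"] by (simp add: mult_ac)
      show "summable (\<lambda>n. \<zeta>^n * (complex_of_real (RR Q $i$k) * complex_of_real (PP Q n $k$j)))" for k
        using summable_mult[OF sE[of k j], of "complex_of_real (RR Q $i$k)"] by (simp add: mult_ac)
    qed
    show "complex_of_real (PP Q 0 $i$j) = 0" by (simp add: PP_0)
    show "complex_of_real (PP Q (Suc n) $i$j) = complex_of_real (cc Q n) * complex_of_real (DD Q $i$j)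
      + (\<Sum>k\<in>UNIV. complex_of_real (RR Q $i$k) * complex_of_real (PP Q n $k$j))" for n
      by (simp add: PP_Suc mult_entry)
  qed
  also have "(\<Sum>n. \<zeta>^n * (complex_of_real (cc Q n) * complex_of_real (DD Q $i$j)
      + (\<Sum>k\<in>UNIV. complex_of_real (RR Q $i$k) * complex_of_real (PP Q n $k$j))))
    = (\<Sum>n. (\<zeta>^n * complex_of_real (cc Q n)) * complex_of_real (DD Q $i$j)
      + (\<Sum>k\<in>UNIV. complex_of_real (RR Q $i$k) * (\<zeta>^n * complex_of_real (PP Q n $k$j))))"
    by (simp add: algebra_simps sum_distrib_left)
  also have "\<dots> = (\<Sum>n. (\<zeta>^n * complex_of_real (cc Q n)) * complex_of_real (DD Q $i$j))
      + (\<Sum>n. \<Sum>k\<in>UNIV. complex_of_real (RR Q $i$k) * (\<zeta>^n * complex_of_real (PP Q n $k$j)))"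
    by (rule suminf_add[symmetric]) (intro summable_mult2 summable_sum summable_mult sc sE)+
  also have "\<dots> = C * complex_of_real (DD Q $i$j) + (\<Sum>k\<in>UNIV. complex_of_real (RR Q $i$k) * E k j)"
    unfolding C_def E_def
    by (simp add: suminf_mult2[OF sc] suminf_sum[OF summable_mult[OF sE]] suminf_mult[OF sE])
  finally show "E i j = \<zeta> * (C * complex_of_real (DD Q $i$j) + (\<Sum>k\<in>UNIV. complex_of_real (RR Q $i$k) * E k j))" .
  have "C = (\<Sum>n. 2 / (of_nat CARD('e))^2 * (\<zeta>^n + (\<Sum>i\<in>UNIV. \<zeta>^n * complex_of_real (PP Q n $i$i))))"
    unfolding C_def cc_PP trace_def
    by (simp add: algebra_simps sum_distrib_left sum_divide_distrib)
  also have "\<dots> = 2 / (of_nat CARD('e))^2 * ((\<Sum>n. \<zeta>^n) + (\<Sum>n. \<Sum>i\<in>UNIV. \<zeta>^n * complex_of_real (PP Q n $i$i)))"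
    using z by (subst suminf_mult) (intro summable_add summable_geometric summable_sum sE, simp_all add: suminf_add[OF summable_geometric summable_sum[OF sE]])
  also have "\<dots> = 2 / (of_nat CARD('e))^2 * (1 / (1 - \<zeta>) + (\<Sum>i\<in>UNIV. E i i))"
    unfolding E_def using z by (simp add: suminf_geometric suminf_sum[OF sE])
  finally show "C = 2 / (of_nat CARD('e))^2 * (1 / (1 - \<zeta>) + (\<Sum>i\<in>UNIV. E i i))" .
qed


lemma trace_rel:
  fixes Q :: "real^'e::finite^'e" and \<zeta> C :: complex and E :: "'e \<Rightarrow> 'e \<Rightarrow> complex"
  assumes g: "goodQ Q" and z: "norm \<zeta> < 1"
    and Eeq: "\<And>i j. E i j = \<zeta> * (C * complex_of_real (DD Q $i$j) + (\<Sum>k\<in>UNIV. complex_of_real (RR Q $i$k) * E k j))"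
  shows "2 * (\<Sum>i\<in>UNIV. E i i) = of_nat CARD('e) * C * (of_nat CARD('e) - of_nat CARD('e) * (1 - \<zeta>) * trace (matrix_inv (MM Q \<zeta>)))"
proof -
  define Nc where "Nc = (of_nat CARD('e) :: complex)"
  have Nc: "Nc \<noteq> 0" by (simp add: Nc_def)
  have ofN: "complex_of_real (real CARD('e)) = Nc" by (simp add: Nc_def)
  define Ec where "Ec = (\<chi> i j. E i j)"
  define Mi where "Mi = matrix_inv (MM Q \<zeta>)"
  define S where "S i j = (\<Sum>k\<in>UNIV. complex_of_real (Q$i$k) * E k j)" for i j
  have Dc: "complex_of_real (DD Q $i$j) = (if i = j then 1 else 0) - complex_of_real (Q$i$j)" for i j
    by (simp add: DD_def mat_entry)
  have Rsum: "(\<Sum>k\<in>UNIV. complex_of_real (RR Q $i$k) * E k j) = ((Nc - 2) / Nc) * E i j + (2 / Nc) * S i j" for i j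
  proof -
    have "(\<Sum>k\<in>UNIV. complex_of_real (RR Q $i$k) * E k j) =
        (\<Sum>k\<in>UNIV. if i = k then ((Nc - 2) / Nc) * E k j else 0) + (\<Sum>k\<in>UNIV. (2 / Nc) * (complex_of_real (Q$i$k) * E k j))"
      unfolding sum.distrib[symmetric]
      by (rule sum.cong) (auto simp: RR_entry Nc_def algebra_simps)
    then show ?thesis by (simp add: S_def sum_distrib_left)
  qed
  have ME: "(MM Q \<zeta> ** Ec) $i$j = Nc * \<zeta> * C * complex_of_real (DD Q $i$j)" for i j
  proof -
    have "(MM Q \<zeta> ** Ec) $i$j = (\<Sum>k\<in>UNIV. MM Q \<zeta> $i$k * E k j)" by (simp add: mult_entry Ec_def)
    also have "\<dots> = (\<Sum>k\<in>UNIV. (if i = k then Nc - \<zeta> * (Nc - 2) else 0) * E k j - 2 * \<zeta> * (complex_of_real (Q$i$k) * E k j))"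
      by (rule sum.cong) (simp_all add: MM_entry2 Nc_def algebra_simps)
    also have "\<dots> = (\<Sum>k\<in>UNIV. (if i = k then Nc - \<zeta> * (Nc - 2) else 0) * E k j) - 2 * \<zeta> * S i j"
      by (simp add: sum_subtractf S_def sum_distrib_left)
    also have "(\<Sum>k\<in>UNIV. (if i = k then Nc - \<zeta> * (Nc - 2) else 0) * E k j) = (Nc - \<zeta> * (Nc - 2)) * E i j"
    proof -
      have "(\<Sum>k\<in>UNIV. (if i = k then Nc - \<zeta> * (Nc - 2) else 0) * E k j) = (\<Sum>k\<in>UNIV. if i = k then (Nc - \<zeta> * (Nc - 2)) * E k j else 0)"
        by (rule sum.cong) auto
      then show ?thesis by simp
    qed
    also have "(Nc - \<zeta> * (Nc - 2)) * E i j - 2 * \<zeta> * S i j = Nc * \<zeta> * C * complex_of_real (DD Q $i$j)"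
    proof -
      have "E i j = \<zeta> * (C * complex_of_real (DD Q $i$j) + ((Nc - 2) / Nc) * E i j + (2 / Nc) * S i j)"
        using Eeq[of i j] Rsum[of i j] by (simp add: add.assoc)
      then have "Nc * E i j = \<zeta> * (Nc * C * complex_of_real (DD Q $i$j) + (Nc - 2) * E i j + 2 * S i j)"
        using Nc by (simp add: field_simps)
      then show ?thesis by (simp add: algebra_simps)
    qed
    finally show ?thesis .
  qed
  have D2: "2 * \<zeta> * complex_of_real (DD Q $k$i) = MM Q \<zeta> $k$i - Nc * (1 - \<zeta>) * (if k = i then 1 else 0)" for k i
    by (simp add: Dc MM_entry2 Nc_def algebra_simps)
  have inv: "Mi ** MM Q \<zeta> = mat 1" unfolding Mi_def by (rule MM_inv[OF g z])
  have Ec_eq: "Ec = Mi ** (MM Q \<zeta> ** Ec)" by (simp add: matrix_mul_assoc inv)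
  have "2 * E i i = Nc * C * (1 - Nc * (1 - \<zeta>) * Mi $i$i)" for i
  proof -
    have "2 * E i i = 2 * (Mi ** (MM Q \<zeta> ** Ec)) $i$i" using Ec_eq by (metis Ec_def vec_lambda_beta)
    also have "\<dots> = Nc * C * (\<Sum>k\<in>UNIV. Mi $i$k * (2 * \<zeta> * complex_of_real (DD Q $k$i)))"
      by (subst mult_entry) (simp add: ME sum_distrib_left mult_ac)
    also have "\<dots> = Nc * C * ((\<Sum>k\<in>UNIV. Mi $i$k * MM Q \<zeta> $k$i) - Nc * (1 - \<zeta>) * Mi $i$i)"
    proof -
      have "(\<Sum>k\<in>UNIV. Mi $i$k * (2 * \<zeta> * complex_of_real (DD Q $k$i))) =
          (\<Sum>k\<in>UNIV. Mi $i$k * MM Q \<zeta> $k$i) - (\<Sum>k\<in>UNIV. if k = i then Nc * (1 - \<zeta>) * Mi $i$k else 0)"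
        unfolding D2 sum_subtractf[symmetric] by (rule sum.cong) (auto simp: algebra_simps)
      then show ?thesis by simp
    qed
    also have "(\<Sum>k\<in>UNIV. Mi $i$k * MM Q \<zeta> $k$i) = 1"
      using arg_cong[OF inv, of "\<lambda>A. A $i$i"] by (simp add: mult_entry mat_entry)
    finally show ?thesis .
  qed
  then have "2 * (\<Sum>i\<in>UNIV. E i i) = (\<Sum>i\<in>UNIV. Nc * C * (1 - Nc * (1 - \<zeta>) * Mi $i$i))"
    by (simp only: sum_distrib_left)
  also have "\<dots> = Nc * C * (Nc - Nc * (1 - \<zeta>) * trace Mi)"
    by (simp add: sum_distrib_left[symmetric] sum_subtractf trace_def Nc_def)
  finally show ?thesis unfolding Nc_def Mi_def .
qed


theorem theorem3p2:
  fixes Q :: "real^'e::finite^'e" and \<zeta> q :: complex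
  assumes "CARD('e) > 8"
    and "irreducible_mat Q" and "stochastic Q" and "symmetric_mat Q"
    and "trace Q = 0"
    and "norm \<zeta> < 1" and "norm q \<le> 1"
  shows "((\<lambda>(n, s). norm (\<zeta>^n * q^s * complex_of_real (alpha Q n s))) summable_on (UNIV :: (nat \<times> nat) set))
    \<and> Galpha Q \<zeta> q =
      2 * \<zeta> * (1 - q) * inverse (of_nat CARD('e) - \<zeta> * (of_nat CARD('e) - 2 + 2 * q))
      / (of_nat CARD('e) * (1 - \<zeta>)^2 *
         trace (matrix_inv (mat (of_nat CARD('e)) -
            mat \<zeta> ** (mat (of_nat CARD('e) - 2) + mat 2 ** complex_mat Q))))"
proof
  have g: "goodQ Q" using assms(1,3,4) unfolding goodQ_def stochastic_def symmetric_mat_def by auto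
  have z: "norm \<zeta> < 1" and q: "norm q \<le> 1" by fact+
  show "(\<lambda>(n, s). norm (\<zeta>^n * q^s * complex_of_real (alpha Q n s))) summable_on UNIV"
    by (rule double_summable[OF g z q])
  have M: "mat (of_nat CARD('e)) - mat \<zeta> ** (mat (of_nat CARD('e) - 2) + mat 2 ** complex_mat Q) = MM Q \<zeta>"
    by (simp add: MM_def)
  define Nc where "Nc = (of_nat CARD('e) :: complex)"
  have Nc: "Nc \<noteq> 0" by (simp add: Nc_def)
  define C where "C = (\<Sum>n. \<zeta>^n * complex_of_real (cc Q n))"
  define E where "E = (\<lambda>i j. \<Sum>n. \<zeta>^n * complex_of_real (PP Q n $i$j))"
  define T where "T = trace (matrix_inv (MM Q \<zeta>))"
  define X where "X = Nc - \<zeta> * (Nc - 2 + 2 * q)"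
  have Eq1: "\<And>i j. E i j = \<zeta> * (C * complex_of_real (DD Q $i$j) + (\<Sum>k\<in>UNIV. complex_of_real (RR Q $i$k) * E k j))"
    unfolding C_def E_def by (rule E_eq(1)[OF g z])
  have Ceq: "C = 2 / Nc^2 * (1 / (1 - \<zeta>) + (\<Sum>i\<in>UNIV. E i i))"
    unfolding C_def E_def Nc_def by (rule E_eq(2)[OF g z])
  have tr: "2 * (\<Sum>i\<in>UNIV. E i i) = Nc * C * (Nc - Nc * (1 - \<zeta>) * T)"
    unfolding Nc_def T_def by (rule trace_rel[OF g z Eq1])
  have G: "Galpha Q \<zeta> q = \<zeta> * ((1 - q) * C + ((Nc - 2 + 2 * q) / Nc) * Galpha Q \<zeta> q)"
    unfolding C_def Nc_def by (rule G_eq(2)[OF g z q])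
  have z1: "1 - \<zeta> \<noteq> 0" using z by auto
  have key: "Nc^2 * C * (1 - \<zeta>)^2 * T = 2"
  proof -
    have "Nc^2 * C = 2 / (1 - \<zeta>) + 2 * (\<Sum>i\<in>UNIV. E i i)"
      using Ceq Nc by (simp add: field_simps)
    also have "\<dots> = 2 / (1 - \<zeta>) + Nc * C * (Nc - Nc * (1 - \<zeta>) * T)" by (simp add: tr)
    finally have "Nc^2 * C * (1 - \<zeta>) * T = 2 / (1 - \<zeta>)"
      by (simp add: algebra_simps power2_eq_square)
    then show ?thesis using z1 by (simp add: field_simps power2_eq_square)
  qed
  have T0: "T \<noteq> 0" using key by auto
  have X0: "X \<noteq> 0"
  proof
    assume "X = 0"
    then have "Nc = \<zeta> * (Nc - 2 + 2 * q)" by (simp add: X_def)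
    then have "norm Nc = norm \<zeta> * norm (Nc - 2 + 2 * q)" by (metis norm_mult)
    also have "\<dots> < norm (Nc - 2 + 2 * q)"
    proof -
      have "norm (Nc - 2 + 2 * q) > 0" using \<open>Nc = \<zeta> * (Nc - 2 + 2 * q)\<close> Nc by auto
      then show ?thesis using z by simp
    qed
    also have "\<dots> \<le> norm (Nc - 2) + norm (2 * q)" by (rule norm_triangle_ineq)
    also have "\<dots> \<le> norm Nc"
    proof -
      have N4: "CARD('e) \<ge> 4" using g by (simp add: goodQ_def)
      have "Nc - 2 = complex_of_real (real CARD('e) - 2)" by (simp add: Nc_def)
      then have "norm (Nc - 2) = real CARD('e) - 2" using N4 by (simp only: norm_of_real)
      moreover have "norm (2 * q) \<le> 2" using q by (simp add: norm_mult)
      moreover have "norm Nc = real CARD('e)" by (simp add: Nc_def)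
      ultimately show ?thesis by simp
    qed
    finally show False by simp
  qed
  have GX: "Galpha Q \<zeta> q * X = \<zeta> * (1 - q) * C * Nc"
  proof -
    have "Galpha Q \<zeta> q * Nc = \<zeta> * ((1 - q) * C * Nc + ((Nc - 2 + 2 * q) / Nc * Nc) * Galpha Q \<zeta> q)"
      using arg_cong[OF G, of "\<lambda>x. x * Nc"] by (simp only: algebra_simps)
    also have "(Nc - 2 + 2 * q) / Nc * Nc = Nc - 2 + 2 * q" using Nc by simp
    finally have "Galpha Q \<zeta> q * Nc = \<zeta> * ((1 - q) * C * Nc + (Nc - 2 + 2 * q) * Galpha Q \<zeta> q)" .
    then show ?thesis by (simp add: X_def algebra_simps)
  qed
  show "Galpha Q \<zeta> q = 2 * \<zeta> * (1 - q) * inverse (of_nat CARD('e) - \<zeta> * (of_nat CARD('e) - 2 + 2 * q))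
      / (of_nat CARD('e) * (1 - \<zeta>)^2 *
         trace (matrix_inv (mat (of_nat CARD('e)) -
            mat \<zeta> ** (mat (of_nat CARD('e) - 2) + mat 2 ** complex_mat Q))))"
  proof -
    have "Galpha Q \<zeta> q = \<zeta> * (1 - q) * C * Nc / X" using GX X0 by (simp add: field_simps)
    also have "C = 2 / (Nc^2 * (1 - \<zeta>)^2 * T)" using key Nc z1 T0 by (simp add: field_simps)
    finally have e: "Galpha Q \<zeta> q = \<zeta> * (1 - q) * (2 / (Nc^2 * (1 - \<zeta>)^2 * T)) * Nc / X" .
    have aux: "\<zeta> * (1 - q) * (2 / (Nc^2 * W * T)) * Nc / X = 2 * \<zeta> * (1 - q) * inverse X / (Nc * W * T)"
      if W: "W \<noteq> 0" for W
      using Nc W T0 X0 by (simp add: field_simps power2_eq_square)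
    have "Galpha Q \<zeta> q = 2 * \<zeta> * (1 - q) * inverse X / (Nc * (1 - \<zeta>)^2 * T)"
      using e aux[of "(1 - \<zeta>)^2"] z1 by simp
    then show ?thesis unfolding M X_def Nc_def T_def .
  qed
qed

end
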